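(* Let $\mathbf{A}$ be a non-trivial algebra whose set $\mathcal{F}$ of basic operations contains no constant symbols, and let $h$ be a unary function on $A$. Then the matrices $\langle\mathbf{A}^{\natural},F^{\natural}\rangle$ and $\langle\mathbf{A}^{\flat},G^{\flat}\rangle$ (defined below) are reduced.
   Context: A matrix $\langle\mathbf{B},H\rangle$ ($H\subseteq B$) is reduced if the largest congruence of $\mathbf{B}$ for which $H$ is a union of blocks is the identity. Construction of $\mathbf{A}^{\natural}$: its universe is the disjoint union of eight copies $A_1,\dots,A_8$ of $A$; for $a\in A$, $a^i$ denotes its copy in $A_i$. Its basic operations are those of $\mathcal{F}$ plus a ternary $\heartsuit$ and a unary $\Box$. For $n$-ary $f\in\mathcal{F}$: $f(a_1^{m_1},\dots,a_n^{m_n})=(f^{\mathbf{A}}(a_1,\dots,a_n))^5$. For $a^m,b^n,c^k$: $\heartsuit(a^m,b^n,c^k)=a^1$ if $a^m=c^k$, $h(a)^5=b^n$ and $m\in\{1,3,4\}$; $=a^2$ if $a^m=c^k$, $h(a)^5=b^n$ and $m\in\{2,5,6,7,8\}$; $=a^4$ if $m,k\in\{1,3,4\}$ and ($a^m\neq c^k$ or $h(a)^5\ne b^n$); $=a^7$ if $\{m,k\}\cap\{2,5,6,7,8\}\neq\emptyset$ and ($a^m\ne c^k$ or $h(a)^5\ne b^n$). $\Box(a^m)=a^m$ if $m\in\{1,2\}$; $=a^{m-1}$ if $m\ge3$ is even; $=a^{m+1}$ if $m\ge3$ is odd. $F^{\natural}=A_1\cup A_2$. Construction of $\mathbf{A}^{\flat}$: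 universe $A_1\cup A_2\cup\{0,1\}$ (two disjoint copies of $A$, with $a^i$ the copy of $a$ in $A_i$, plus two fresh elements $0,1$). Basic operations: those of $\mathcal{F}$, a binary $+$, a unary $\Box^{a}$ for each $a\in A$, and a constant $\mathbf{1}$ interpreted as $1$. For $n$-ary $f\in\mathcal{F}$: $f(b_1,\dots,b_n)=(f^{\mathbf{A}}(a_1,\dots,a_n))^2$ if $b_i\in\{a_i^1,a_i^2\}$ for all $i$; $=1$ if $b_1=\dots=b_n=1$; $=0$ otherwise. $a+b=1$ if either $a=b=1$ or ($a=c^1$ for some $c\in A$ and $b=h(c)^2$); $a+b=0$ otherwise. $\Box^{a}(b)=b$ if $b\in(A_1\cup A_2)\setminus\{a^1,a^2\}$; $\Box^a(a^1)=a^2$; $\Box^a(a^2)=a^1$; $\Box^a(0)=\Box^a(1)=0$. $G^{\flat}=A_1\cup\{1\}$. *)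

theory Defs
  imports Main
begin

definition congruence ::
  "'b set \<Rightarrow> 's set \<Rightarrow> ('s \<Rightarrow> nat) \<Rightarrow> ('s \<Rightarrow> 'b list \<Rightarrow> 'b) \<Rightarrow> ('b \<times> 'b) set \<Rightarrow> bool" where
  "congruence B S ar ops \<theta> \<longleftrightarrow> equiv B \<theta> \<and>
     (\<forall>s\<in>S. \<forall>xs ys. length xs = ar s \<longrightarrow> length ys = ar s \<longrightarrow> set xs \<subseteq> B \<longrightarrow> set ys \<subseteq> B \<longrightarrow>
        list_all2 (\<lambda>x y. (x, y) \<in> \<theta>) xs ys \<longrightarrow> (ops s xs, ops s ys) \<in> \<theta>)"

definition compatible :: "('b \<times> 'b) set \<Rightarrow> 'b set \<Rightarrow> bool" where
  "compatible \<theta> H \<longleftrightarrow> (\<forall>x y. (x, y) \<in> \<theta> \<longrightarrow> x \<in> H \<longrightarrow> y \<in> H)"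

definition reduced ::
  "'b set \<Rightarrow> 's set \<Rightarrow> ('s \<Rightarrow> nat) \<Rightarrow> ('s \<Rightarrow> 'b list \<Rightarrow> 'b) \<Rightarrow> 'b set \<Rightarrow> bool" where
  "reduced B S ar ops H \<longleftrightarrow>
     congruence B S ar ops (Id_on B) \<and> compatible (Id_on B) H \<and>
     (\<forall>\<theta>. congruence B S ar ops \<theta> \<and> compatible \<theta> H \<longrightarrow> \<theta> \<subseteq> Id_on B)"

text \<open>Elements a^m are pairs (a, m) with m in {1..8}.\<close>

datatype 'f nat_sym = NOp 'f | NHeart | NBox

definition nat_carrier :: "'a set \<Rightarrow> ('a \<times> nat) set" where
  "nat_carrier A = A \<times> {1..8}"

fun nat_ar :: "('f \<Rightarrow> nat) \<Rightarrow> 'f nat_sym \<Rightarrow> nat" where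
  "nat_ar ar (NOp f) = ar f"
| "nat_ar ar NHeart = 3"
| "nat_ar ar NBox = 1"

fun heart :: "('a \<Rightarrow> 'a) \<Rightarrow> 'a \<times> nat \<Rightarrow> 'a \<times> nat \<Rightarrow> 'a \<times> nat \<Rightarrow> 'a \<times> nat" where
  "heart h (a, m) (b, n) (c, k) =
     (if (a, m) = (c, k) \<and> (h a, 5) = (b, n) then
        (if m \<in> {1, 3, 4} then (a, 1) else (a, 2))
      else if m \<in> {1, 3, 4} \<and> k \<in> {1, 3, 4} then (a, 4)
      else (a, 7))"

fun nbox :: "'a \<times> nat \<Rightarrow> 'a \<times> nat" where
  "nbox (a, m) =
     (if m \<in> {1, 2} then (a, m) else if even m then (a, m - 1) else (a, m + 1))"

fun nat_ops :: "('f \<Rightarrow> 'a list \<Rightarrow> 'a) \<Rightarrow> ('a \<Rightarrow> 'a) \<Rightarrow> 'f nat_sym \<Rightarrow> ('a \<times> nat) list \<Rightarrow> 'a \<times> nat" where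
  "nat_ops opA h (NOp f) xs = (opA f (map fst xs), 5)"
| "nat_ops opA h NHeart xs = heart h (xs ! 0) (xs ! 1) (xs ! 2)"
| "nat_ops opA h NBox xs = nbox (xs ! 0)"

definition nat_filter :: "'a set \<Rightarrow> ('a \<times> nat) set" where
  "nat_filter A = A \<times> {1, 2}"

datatype 'a flat_el = Cp nat 'a | FZero | FOne

datatype ('f, 'a) flat_sym = FlOp 'f | FlPlus | FlBox 'a | FlOne

definition flat_carrier :: "'a set \<Rightarrow> 'a flat_el set" where
  "flat_carrier A = {Cp i a | i a. i \<in> {1, 2} \<and> a \<in> A} \<union> {FZero, FOne}"

definition flat_syms :: "'a set \<Rightarrow> ('f, 'a) flat_sym set" where
  "flat_syms A = range FlOp \<union> {FlPlus, FlOne} \<union> FlBox ` A"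

fun flat_ar :: "('f \<Rightarrow> nat) \<Rightarrow> ('f, 'a) flat_sym \<Rightarrow> nat" where
  "flat_ar ar (FlOp f) = ar f"
| "flat_ar ar FlPlus = 2"
| "flat_ar ar (FlBox a) = 1"
| "flat_ar ar FlOne = 0"

fun is_cp :: "'a flat_el \<Rightarrow> bool" where
  "is_cp (Cp i a) = (i \<in> {1, 2})"
| "is_cp _ = False"

fun cp_val :: "'a flat_el \<Rightarrow> 'a" where
  "cp_val (Cp i a) = a"
| "cp_val _ = undefined"

definition flat_plus :: "('a \<Rightarrow> 'a) \<Rightarrow> 'a flat_el \<Rightarrow> 'a flat_el \<Rightarrow> 'a flat_el" where
  "flat_plus h x y =
     (if (x = FOne \<and> y = FOne) \<or> (\<exists>c. x = Cp 1 c \<and> y = Cp 2 (h c)) then FOne else FZero)"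

definition flat_box :: "'a \<Rightarrow> 'a flat_el \<Rightarrow> 'a flat_el" where
  "flat_box a b =
     (if b = Cp 1 a then Cp 2 a
      else if b = Cp 2 a then Cp 1 a
      else if b = FZero \<or> b = FOne then FZero
      else b)"

fun flat_ops :: "('f \<Rightarrow> 'a list \<Rightarrow> 'a) \<Rightarrow> ('a \<Rightarrow> 'a) \<Rightarrow> ('f, 'a) flat_sym \<Rightarrow> 'a flat_el list \<Rightarrow> 'a flat_el" where
  "flat_ops opA h (FlOp f) xs =
     (if (\<forall>b\<in>set xs. is_cp b) then Cp 2 (opA f (map cp_val xs))
      else if (\<forall>b\<in>set xs. b = FOne) then FOne
      else FZero)"
| "flat_ops opA h FlPlus xs = flat_plus h (xs ! 0) (xs ! 1)"
| "flat_ops opA h (FlBox a) xs = flat_box a (xs ! 0)"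
| "flat_ops opA h FlOne xs = FOne"

definition flat_filter :: "'a set \<Rightarrow> 'a flat_el set" where
  "flat_filter A = {Cp 1 a | a. a \<in> A} \<union> {FOne}"

end

theory Submission
  imports Defs
begin

lemma cong_app:
  assumes "congruence B S ar ops \<theta>" "s \<in> S" "length xs = ar s" "length ys = ar s"
    "set xs \<subseteq> B" "set ys \<subseteq> B" "list_all2 (\<lambda>x y. (x, y) \<in> \<theta>) xs ys"
  shows "(ops s xs, ops s ys) \<in> \<theta>"
  using assms unfolding congruence_def by blast

lemma cong_sub: "congruence B S ar ops \<theta> \<Longrightarrow> \<theta> \<subseteq> B \<times> B"
  unfolding congruence_def equiv_def by blast

lemma cong_refl: "congruence B S ar ops \<theta> \<Longrightarrow> x \<in> B \<Longrightarrow> (x, x) \<in> \<theta>"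
  unfolding congruence_def equiv_def refl_on_def by blast

lemma cong_sym: "congruence B S ar ops \<theta> \<Longrightarrow> (x, y) \<in> \<theta> \<Longrightarrow> (y, x) \<in> \<theta>"
  unfolding congruence_def equiv_def sym_def by blast

lemma id_cong:
  assumes "\<And>s xs. s \<in> S \<Longrightarrow> length xs = ar s \<Longrightarrow> set xs \<subseteq> B \<Longrightarrow> ops s xs \<in> B"
  shows "congruence B S ar ops (Id_on B)"
  unfolding congruence_def
proof (intro conjI ballI allI impI)
  show "equiv B (Id_on B)" by (rule equivI) (auto simp: refl_on_def sym_def trans_def)
next
  fix s xs ys assume "s \<in> S" "length xs = ar s" "length ys = ar s" "set xs \<subseteq> B" "set ys \<subseteq> B"
    "list_all2 (\<lambda>x y. (x, y) \<in> Id_on B) xs ys"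
  moreover have "xs = ys" using \<open>list_all2 _ xs ys\<close>
    by (induction rule: list_all2_induct) auto
  ultimately show "(ops s xs, ops s ys) \<in> Id_on B" using assms by auto
qed

lemma id_compat: "compatible (Id_on B) H"
  unfolding compatible_def by auto

lemma part1:
  fixes A :: "'a set" and ar :: "'f \<Rightarrow> nat" and opA :: "'f \<Rightarrow> 'a list \<Rightarrow> 'a"
  assumes closed: "\<And>f xs. length xs = ar f \<Longrightarrow> set xs \<subseteq> A \<Longrightarrow> opA f xs \<in> A"
    and h_unary: "\<And>a. a \<in> A \<Longrightarrow> h a \<in> A"
  shows "reduced (nat_carrier A) UNIV (nat_ar ar) (nat_ops opA h) (nat_filter A)"
  unfolding reduced_def
proof (intro conjI allI impI)
  show "congruence (nat_carrier A) UNIV (nat_ar ar) (nat_ops opA h) (Id_on (nat_carrier A))"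
  proof (rule id_cong)
    fix s and xs :: "('a \<times> nat) list"
    assume "s \<in> (UNIV :: 'f nat_sym set)" "length xs = nat_ar ar s" "set xs \<subseteq> nat_carrier A"
    then show "nat_ops opA h s xs \<in> nat_carrier A"
    proof (cases s)
      case (NOp f)
      have "opA f (map fst xs) \<in> A"
        using closed[of "map fst xs" f] \<open>length xs = _\<close> \<open>set xs \<subseteq> _\<close> NOp
        by (force simp: nat_carrier_def)
      then show ?thesis using NOp by (simp add: nat_carrier_def)
    next
      case NHeart
      then have "xs ! 0 \<in> nat_carrier A" using \<open>length xs = _\<close> \<open>set xs \<subseteq> _\<close> by auto
      then obtain a m where "xs ! 0 = (a, m)" "a \<in> A" by (auto simp: nat_carrier_def)
      moreover obtain b n where "xs ! 1 = (b, n)" by fastforce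
      moreover obtain c k where "xs ! 2 = (c, k)" by fastforce
      ultimately show ?thesis using NHeart by (auto simp: nat_carrier_def)
    next
      case NBox
      then have "xs ! 0 \<in> nat_carrier A" using \<open>length xs = _\<close> \<open>set xs \<subseteq> _\<close> by auto
      then obtain a m where "xs ! 0 = (a, m)" "a \<in> A" "m \<in> {1..8}" by (auto simp: nat_carrier_def)
      moreover have "odd m \<Longrightarrow> m \<le> 7" using \<open>m \<in> {1..8}\<close> by (auto elim: oddE)
      ultimately show ?thesis using NBox by (auto simp: nat_carrier_def)
    qed
  qed
next
  show "compatible (Id_on (nat_carrier A)) (nat_filter A)" by (rule id_compat)
next
  fix \<theta> assume H: "congruence (nat_carrier A) UNIV (nat_ar ar) (nat_ops opA h) \<theta> \<and>
      compatible \<theta> (nat_filter A)"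
  then have C: "congruence (nat_carrier A) UNIV (nat_ar ar) (nat_ops opA h) \<theta>"
    and P: "compatible \<theta> (nat_filter A)" by auto
  show "\<theta> \<subseteq> Id_on (nat_carrier A)"
  proof
    fix p assume "p \<in> \<theta>"
    then obtain x y where p: "p = (x, y)" by (cases p)
    have xy: "x \<in> nat_carrier A" "y \<in> nat_carrier A" using cong_sub[OF C] \<open>p \<in> \<theta>\<close> p by auto
    then obtain a m where xa: "x = (a, m)" "a \<in> A" "m \<in> {1..8}" by (auto simp: nat_carrier_def)
    have hb: "(h a, 5::nat) \<in> nat_carrier A" using h_unary xa by (auto simp: nat_carrier_def)
    show "p \<in> Id_on (nat_carrier A)"
    proof (rule ccontr)
      assume "p \<notin> Id_on (nat_carrier A)"
      then have "x \<noteq> y" using p xy by auto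
      have "(nat_ops opA h NHeart [x, (h a, 5), x], nat_ops opA h NHeart [x, (h a, 5), y]) \<in> \<theta>"
        by (rule cong_app[OF C]) (use xy hb cong_refl[OF C] \<open>p \<in> \<theta>\<close> p in auto)
      moreover have "nat_ops opA h NHeart [x, (h a, 5), x] \<in> nat_filter A"
        using xa by (auto simp: nat_filter_def)
      moreover have "nat_ops opA h NHeart [x, (h a, 5), y] \<notin> nat_filter A"
        using xa \<open>x \<noteq> y\<close> by (cases y) (auto simp: nat_filter_def)
      ultimately show False using P unfolding compatible_def by blast
    qed
  qed
qed


lemma part2:
  fixes A :: "'a set" and ar :: "'f \<Rightarrow> nat" and opA :: "'f \<Rightarrow> 'a list \<Rightarrow> 'a"
  assumes closed: "\<And>f xs. length xs = ar f \<Longrightarrow> set xs \<subseteq> A \<Longrightarrow> opA f xs \<in> A"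
    and h_unary: "\<And>a. a \<in> A \<Longrightarrow> h a \<in> A"
  shows "reduced (flat_carrier A) (flat_syms A) (flat_ar ar) (flat_ops opA h) (flat_filter A)"
  unfolding reduced_def
proof (intro conjI allI impI)
  show "congruence (flat_carrier A) (flat_syms A) (flat_ar ar) (flat_ops opA h) (Id_on (flat_carrier A))"
  proof (rule id_cong)
    fix s and xs :: "'a flat_el list"
    assume "s \<in> (flat_syms A :: ('f, 'a) flat_sym set)" "length xs = flat_ar ar s" "set xs \<subseteq> flat_carrier A"
    then show "flat_ops opA h s xs \<in> flat_carrier A"
    proof (cases s)
      case (FlOp f)
      show ?thesis
      proof (cases "\<forall>b\<in>set xs. is_cp b")
        case True
        have "set (map cp_val xs) \<subseteq> A"
        proof
          fix c assume "c \<in> set (map cp_val xs)"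
          then obtain x where x: "x \<in> set xs" "c = cp_val x" by auto
          then have "x \<in> flat_carrier A" using \<open>set xs \<subseteq> _\<close> by auto
          then show "c \<in> A" using x True by (auto simp: flat_carrier_def)
        qed
        then have "opA f (map cp_val xs) \<in> A"
          using closed[of "map cp_val xs" f] \<open>length xs = _\<close> FlOp by auto
        then show ?thesis using True FlOp by (simp add: flat_carrier_def)
      qed (use FlOp in \<open>auto simp: flat_carrier_def\<close>)
    next
      case FlPlus
      then show ?thesis by (auto simp: flat_carrier_def flat_plus_def)
    next
      case (FlBox a)
      then have "xs ! 0 \<in> flat_carrier A" using \<open>length xs = _\<close> \<open>set xs \<subseteq> _\<close> by auto
      moreover have "a \<in> A" using FlBox \<open>s \<in> flat_syms A\<close> by (auto simp: flat_syms_def)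
      ultimately show ?thesis using FlBox by (auto simp: flat_carrier_def flat_box_def)
    next
      case FlOne
      then show ?thesis by (auto simp: flat_carrier_def)
    qed
  qed
next
  show "compatible (Id_on (flat_carrier A)) (flat_filter A)" by (rule id_compat)
next
  fix \<theta> assume H: "congruence (flat_carrier A) (flat_syms A) (flat_ar ar) (flat_ops opA h) \<theta> \<and>
      compatible \<theta> (flat_filter A)"
  then have C: "congruence (flat_carrier A) (flat_syms A) (flat_ar ar) (flat_ops opA h) \<theta>"
    and P: "compatible \<theta> (flat_filter A)" by auto
  have P': "(x, y) \<in> \<theta> \<Longrightarrow> x \<in> flat_filter A \<longleftrightarrow> y \<in> flat_filter A" for x y
    using P cong_sym[OF C] unfolding compatible_def by blast
  have box: "(flat_box a x, flat_box a y) \<in> \<theta>" if "(x, y) \<in> \<theta>" "a \<in> A" for a x y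
  proof -
    have "(flat_ops opA h (FlBox a) [x], flat_ops opA h (FlBox a) [y]) \<in> \<theta>"
      by (rule cong_app[OF C]) (use that cong_sub[OF C] in \<open>auto simp: flat_syms_def\<close>)
    then show ?thesis by simp
  qed
  have plus: "(flat_plus h x (Cp 2 (h a)), flat_plus h y (Cp 2 (h a))) \<in> \<theta>" if "(x, y) \<in> \<theta>" "a \<in> A" for a x y
  proof -
    have c: "Cp 2 (h a) \<in> flat_carrier A" using h_unary that by (auto simp: flat_carrier_def)
    have "(flat_ops opA h FlPlus [x, Cp 2 (h a)], flat_ops opA h FlPlus [y, Cp 2 (h a)]) \<in> \<theta>"
      by (rule cong_app[OF C]) (use that cong_sub[OF C] c cong_refl[OF C] in \<open>auto simp: flat_syms_def\<close>)
    then show ?thesis by simp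
  qed
  have main: "x = y" if "(x, y) \<in> \<theta>" for x y
  proof (rule ccontr)
    assume ne: "x \<noteq> y"
    have xy: "x \<in> flat_carrier A" "y \<in> flat_carrier A" using cong_sub[OF C] that by auto
    have G: "x \<in> flat_filter A \<longleftrightarrow> y \<in> flat_filter A" using P' that .
    {
      fix u v assume uv: "(u, v) \<in> \<theta>" "u \<noteq> v" "u \<in> flat_carrier A" "v \<in> flat_carrier A"
        "u \<in> flat_filter A \<longleftrightarrow> v \<in> flat_filter A" "u \<noteq> FZero" "u \<noteq> FOne"
      then obtain i a where u: "u = Cp i a" "i \<in> {1,2}" "a \<in> A" by (auto simp: flat_carrier_def)
      have False
      proof (cases "i = 1")
        case True
        show False
        proof (cases "v = FOne")
          case True
          have "(flat_plus h u (Cp 2 (h a)), flat_plus h v (Cp 2 (h a))) \<in> \<theta>" using plus uv u by blast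
          moreover have "flat_plus h u (Cp 2 (h a)) = FOne" using u \<open>i = 1\<close> by (auto simp: flat_plus_def)
          moreover have "flat_plus h v (Cp 2 (h a)) = FZero" using True by (auto simp: flat_plus_def)
          moreover have "FOne \<in> flat_filter A" "FZero \<notin> flat_filter A" by (auto simp: flat_filter_def)
          ultimately show False using P' by metis
        next
          case False
          then obtain b where v: "v = Cp 1 b" "b \<noteq> a" using uv u \<open>i = 1\<close>
            by (auto simp: flat_carrier_def flat_filter_def)
          have "(flat_box a u, flat_box a v) \<in> \<theta>" using box uv u by blast
          moreover have "flat_box a u = Cp 2 a" using u \<open>i = 1\<close> by (auto simp: flat_box_def)
          moreover have "flat_box a v = Cp 1 b" using v by (auto simp: flat_box_def)
          moreover have "Cp 1 b \<in> flat_filter A" using v uv(4) by (auto simp: flat_filter_def flat_carrier_def)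
          moreover have "Cp 2 a \<notin> flat_filter A" by (auto simp: flat_filter_def)
          ultimately show False using P' by metis
        qed
      next
        case False
        then have i2: "i = 2" using u by auto
        have vv: "v = FZero \<or> (\<exists>b. v = Cp 2 b \<and> b \<noteq> a)" using uv u i2
          by (auto simp: flat_carrier_def flat_filter_def)
        have "(flat_box a u, flat_box a v) \<in> \<theta>" using box uv u by blast
        moreover have "flat_box a u = Cp 1 a" using u i2 by (auto simp: flat_box_def)
        moreover have "flat_box a v \<notin> flat_filter A" using vv by (auto simp: flat_box_def flat_filter_def)
        moreover have "Cp 1 a \<in> flat_filter A" using u by (auto simp: flat_filter_def)
        ultimately show False using P' by metis
      qed
    } note key = this
    show False
    proof (cases "x \<in> {FZero, FOne}")
      case True
      show False
      proof (cases "y \<in> {FZero, FOne}")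
        case True
        then show False using \<open>x \<in> {FZero, FOne}\<close> G ne by (auto simp: flat_filter_def)
      next
        case False
        then show False using key[of y x] cong_sym[OF C that] ne xy G by auto
      qed
    next
      case False
      then show False using key[of x y] that ne xy G by auto
    qed
  qed
  show "\<theta> \<subseteq> Id_on (flat_carrier A)"
    using main cong_sub[OF C] by auto
qed

theorem lemma4p1:
  fixes A :: "'a set" and ar :: "'f \<Rightarrow> nat" and opA :: "'f \<Rightarrow> 'a list \<Rightarrow> 'a"
    and h :: "'a \<Rightarrow> 'a"
  assumes closed: "\<And>f xs. length xs = ar f \<Longrightarrow> set xs \<subseteq> A \<Longrightarrow> opA f xs \<in> A"
    and nontrivial: "\<exists>x\<in>A. \<exists>y\<in>A. x \<noteq> y"
    and no_constants: "\<And>f. ar f \<noteq> 0"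
    and h_unary: "\<And>a. a \<in> A \<Longrightarrow> h a \<in> A"
  shows "reduced (nat_carrier A) UNIV (nat_ar ar) (nat_ops opA h) (nat_filter A)
       \<and> reduced (flat_carrier A) (flat_syms A) (flat_ar ar) (flat_ops opA h) (flat_filter A)"
  by (intro conjI part1 part2) (use closed h_unary in auto)

end
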